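(* Let $k\ge 2$ and consider any urn of $k$ balls, and the Poisson sampling model with parameter $n>0$. Let $\alpha,\beta>0$ with $\beta>\alpha$, and set $L=\alpha\log k$ and $M=\frac{\beta k\log k}{n}$, assumed to be integers. Let $w=(w_1,\dots,w_L)^\top\in\mathbb{R}^L$ and define $u_j=w_j\, j!\,\big(\frac{k}{nM}\big)^j$ for $j\in\{1,\dots,L\}$ and $u_j=0$ for $j=0$ and for $j>L$. Define $\tilde C=\hat C_{\rm seen}+\sum_{j\ge1}u_j\Phi_j$ and $\hat C=\min\{\max\{\tilde C,\hat C_{\rm seen}\},k\}$. Then $$\mathbb{E}(\hat C-C)^2\le k^2e^{-2n/k}\|Bw-\mathbf 1\|_\infty^2+ke^{-n/k}+k\max_{m\in\{1,\dots,M\}}\mathbb{E}_{N\sim\mathrm{Poi}(nm/k)}[u_N^2]+k^{-(\beta-\alpha\log\frac{e\beta}{\alpha}-3)}.$$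
   Context: An urn contains $k$ balls, each having a color; $k_i$ is the number of balls of color $i$ ($\sum_i k_i=k$) and $C=\sum_i\mathbf 1\{k_i>0\}$ is the number of distinct colors. Poisson sampling model: a random number $N\sim\mathrm{Poi}(n)$ of balls is drawn uniformly at random with replacement from the urn, $N$ independent of the draws. Equivalently, the histograms $N_i$ (number of observed balls of color $i$) are independent with $N_i\sim\mathrm{Poi}(nk_i/k)$. The fingerprints are $\Phi_j=\#\{i:N_i=j\}$ for $j\ge 0$, and $\hat C_{\rm seen}=\sum_{j\ge1}\Phi_j$ is the number of observed colors. $B$ is the $M\times L$ matrix with entries $B_{ij}=(i/M)^j$, $1\le i\le M$, $1\le j\le L$; $\mathbf 1$ is the all-ones vector in $\mathbb{R}^M$; $\|\cdot\|_\infty$ is the vector max-norm. Logarithms are natural. The expectation is over the sampling, for the fixed urn. *)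

theory Defs
  imports "HOL-Analysis.Analysis" "HOL-Probability.Probability"
begin

text \<open>Urn: a finite set I of colors (those present), kc i \<ge> 1 balls of color i.
  A histogram is a function N assigning to each color its number of observed balls.\<close>

definition fingerprint :: "'c set \<Rightarrow> ('c \<Rightarrow> nat) \<Rightarrow> nat \<Rightarrow> nat" where
  "fingerprint I N j = card {i \<in> I. N i = j}"

text \<open>Sums over j \<ge> 1 are infinite sums (infsum); only finitely many terms are nonzero.\<close>
definition C_seen :: "'c set \<Rightarrow> ('c \<Rightarrow> nat) \<Rightarrow> real" where
  "C_seen I N = infsum (\<lambda>j. real (fingerprint I N j)) {1..}"

definition poisson_hist :: "'c set \<Rightarrow> ('c \<Rightarrow> nat) \<Rightarrow> real \<Rightarrow> ('c \<Rightarrow> nat) pmf" where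
  "poisson_hist I kc n =
     Pi_pmf I 0 (\<lambda>i. poisson_pmf (n * real (kc i) / real (\<Sum>i\<in>I. kc i)))"

definition u_coef :: "(nat \<Rightarrow> real) \<Rightarrow> nat \<Rightarrow> nat \<Rightarrow> real \<Rightarrow> real \<Rightarrow> nat \<Rightarrow> real" where
  "u_coef w L M k n j =
     (if 1 \<le> j \<and> j \<le> L then w j * fact j * (k / (n * real M)) ^ j else 0)"

definition C_tilde :: "'c set \<Rightarrow> (nat \<Rightarrow> real) \<Rightarrow> ('c \<Rightarrow> nat) \<Rightarrow> real" where
  "C_tilde I u N = C_seen I N + infsum (\<lambda>j. u j * real (fingerprint I N j)) {1..}"

definition C_hat :: "'c set \<Rightarrow> (nat \<Rightarrow> real) \<Rightarrow> real \<Rightarrow> ('c \<Rightarrow> nat) \<Rightarrow> real" where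
  "C_hat I u k N = min (max (C_tilde I u N) (C_seen I N)) k"

text \<open>\<parallel>B w - 1\<parallel>_\<infinity>, with B_{ij} = (i/M)^j, 1 \<le> i \<le> M, 1 \<le> j \<le> L.\<close>
definition Bw_err :: "nat \<Rightarrow> nat \<Rightarrow> (nat \<Rightarrow> real) \<Rightarrow> real" where
  "Bw_err M L w = Max ((\<lambda>i. \<bar>(\<Sum>j=1..L. (real i / real M) ^ j * w j) - 1\<bar>) ` {1..M})"

end

theory Submission imports Defs begin

lemma exp_partial_le:
  fixes x :: real assumes "x \<ge> 0"
  shows "(\<Sum>j\<le>m. x^j / fact j) \<le> exp x"
proof -
  have s: "(\<lambda>j. x^j / fact j) sums exp x" using exp_converges[of x]
    by (simp add: divide_inverse mult.commute)
  have "(\<Sum>j\<le>m. x^j / fact j) \<le> suminf (\<lambda>j. x^j / fact j)"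
    by (rule sum_le_suminf) (use s assms in \<open>auto simp: sums_summable\<close>)
  thus ?thesis using s sums_unique by metis
qed

lemma infsum_fp:
  assumes "finite I"
  shows "infsum (\<lambda>j. g j * real (fingerprint I N j)) {1..} = (\<Sum>i\<in>I. if 1 \<le> N i then g (N i) else 0)"
proof -
  let ?T = "N ` I \<inter> {1..}"
  have fT: "finite ?T" using assms by auto
  have "infsum (\<lambda>j. g j * real (fingerprint I N j)) {1..} = infsum (\<lambda>j. g j * real (fingerprint I N j)) ?T"
    by (rule infsum_cong_neutral) (auto simp: fingerprint_def card_gt_0_iff)
  also have "\<dots> = (\<Sum>j\<in>?T. g j * real (fingerprint I N j))" using fT by (rule infsum_finite)
  also have "\<dots> = (\<Sum>j\<in>?T. \<Sum>i\<in>{i\<in>{i\<in>I. 1 \<le> N i}. N i = j}. g (N i))"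
  proof (rule sum.cong[OF refl])
    fix j assume "j \<in> ?T"
    then have e: "{i\<in>{i\<in>I. 1 \<le> N i}. N i = j} = {i\<in>I. N i = j}" by auto
    show "g j * real (fingerprint I N j) = (\<Sum>i\<in>{i\<in>{i\<in>I. 1 \<le> N i}. N i = j}. g (N i))"
      unfolding e fingerprint_def by simp
  qed
  also have "\<dots> = (\<Sum>i\<in>{i\<in>I. 1 \<le> N i}. g (N i))"
    by (rule sum.group) (use assms in auto)
  also have "\<dots> = (\<Sum>i\<in>I. if 1 \<le> N i then g (N i) else 0)"
    using assms by (simp add: sum.inter_filter)
  finally show ?thesis .
qed

lemma C_seen_eq:
  assumes "finite I"
  shows "C_seen I N = (\<Sum>i\<in>I. if 1 \<le> N i then 1 else 0)"
  using infsum_fp[OF assms, of "\<lambda>_. 1" N] unfolding C_seen_def by simp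

lemma pmf_bounded_integrable:
  fixes f :: "'a \<Rightarrow> real"
  assumes "\<And>x. \<bar>f x\<bar> \<le> B"
  shows "integrable (measure_pmf p) f"
  by (rule measure_pmf.integrable_const_bound[where B=B]) (use assms in auto)

lemma pi_marginal:
  fixes f :: "'b \<Rightarrow> real"
  assumes "finite I" "i \<in> I"
  shows "measure_pmf.expectation (Pi_pmf I d p) (\<lambda>y. f (y i)) = measure_pmf.expectation (p i) f"
proof -
  have "measure_pmf.expectation (Pi_pmf I d p) (\<lambda>y. f (y i)) =
        measure_pmf.expectation (map_pmf (\<lambda>y. y i) (Pi_pmf I d p)) f" by simp
  also have "map_pmf (\<lambda>y. y i) (Pi_pmf I d p) = p i" using assms by (simp add: Pi_pmf_component)
  finally show ?thesis .
qed

lemma pi_indep2: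
  fixes f g :: "'b \<Rightarrow> real"
  assumes "finite I" "i \<in> I" "j \<in> I" "i \<noteq> j"
    and bf: "\<And>v. \<bar>f v\<bar> \<le> B" and bg: "\<And>v. \<bar>g v\<bar> \<le> B"
  shows "measure_pmf.expectation (Pi_pmf I d p) (\<lambda>y. f (y i) * g (y j))
       = measure_pmf.expectation (p i) f * measure_pmf.expectation (p j) g"
proof -
  define F where "F x v = (if x = i then f v + B else if x = j then g v + B else 1)" for x v
  have B0: "B \<ge> 0" using bf[of undefined] by linarith
  have fB: "f v + B \<ge> 0" for v using bf[of v] by linarith
  have gB: "g v + B \<ge> 0" for v using bg[of v] by linarith
  have pr: "(\<Prod>x\<in>I. F x (y x)) = (f (y i) + B) * (g (y j) + B)" for y
  proof -
    have "(\<Prod>x\<in>I. F x (y x)) = (\<Prod>x\<in>{i,j}. F x (y x))"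
      by (rule prod.mono_neutral_right) (use assms in \<open>auto simp: F_def\<close>)
    also have "\<dots> = (f (y i) + B) * (g (y j) + B)" using assms by (simp add: F_def)
    finally show ?thesis .
  qed
  have Fi: "F i = (\<lambda>v. f v + B)" and Fj: "F j = (\<lambda>v. g v + B)"
    using assms by (auto simp: F_def fun_eq_iff)
  have pr2: "(\<Prod>x\<in>I. measure_pmf.expectation (p x) (F x)) =
     measure_pmf.expectation (p i) (\<lambda>v. f v + B) * measure_pmf.expectation (p j) (\<lambda>v. g v + B)"
  proof -
    have "(\<Prod>x\<in>I. measure_pmf.expectation (p x) (F x)) = (\<Prod>x\<in>{i,j}. measure_pmf.expectation (p x) (F x))"
    proof -
      have "F x = (\<lambda>_. 1)" if "x \<in> I - {i,j}" for x using that by (auto simp: F_def fun_eq_iff)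
      then show ?thesis by (intro prod.mono_neutral_right) (use assms in auto)
    qed
    also have "\<dots> = measure_pmf.expectation (p i) (\<lambda>v. f v + B) * measure_pmf.expectation (p j) (\<lambda>v. g v + B)"
      using assms by (simp add: Fi Fj)
    finally show ?thesis .
  qed
  have intF: "integrable (measure_pmf (p x)) (F x)" for x
  proof (rule pmf_bounded_integrable[where B="B + B + 1"])
    fix v show "\<bar>F x v\<bar> \<le> B + B + 1" using bf[of v] bg[of v] B0 by (auto simp: F_def)
  qed
  have "measure_pmf.expectation (Pi_pmf I d p) (\<lambda>y. \<Prod>x\<in>I. F x (y x)) = (\<Prod>x\<in>I. measure_pmf.expectation (p x) (F x))"
    apply (rule expectation_prod_Pi_pmf)
      apply (rule assms)
     apply (rule intF)
    using fB gB by (auto simp: F_def)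
  hence E1: "measure_pmf.expectation (Pi_pmf I d p) (\<lambda>y. (f (y i) + B) * (g (y j) + B)) =
     measure_pmf.expectation (p i) (\<lambda>v. f v + B) * measure_pmf.expectation (p j) (\<lambda>v. g v + B)"
    unfolding pr pr2 .
  have if1: "integrable (measure_pmf q) f" for q by (rule pmf_bounded_integrable[where B=B]) (rule bf)
  have ig1: "integrable (measure_pmf q) g" for q by (rule pmf_bounded_integrable[where B=B]) (rule bg)
  have ifg: "integrable (measure_pmf (Pi_pmf I d p)) (\<lambda>y. f (y i) * g (y j))"
  proof (rule pmf_bounded_integrable[where B="B*B"])
    fix y show "\<bar>f (y i) * g (y j)\<bar> \<le> B * B"
      unfolding abs_mult by (rule mult_mono) (use bf bg B0 in auto)
  qed
  have ifi: "integrable (measure_pmf (Pi_pmf I d p)) (\<lambda>y. f (y i))"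
    by (rule pmf_bounded_integrable[where B="B"]) (use bf in auto)
  have igj: "integrable (measure_pmf (Pi_pmf I d p)) (\<lambda>y. g (y j))"
    by (rule pmf_bounded_integrable[where B="B"]) (use bg in auto)
  have expand: "(\<lambda>y. (f (y i) + B) * (g (y j) + B)) = (\<lambda>y. f (y i) * g (y j) + B * f (y i) + B * g (y j) + B*B)"
    by (auto simp: algebra_simps)
  have "measure_pmf.expectation (Pi_pmf I d p) (\<lambda>y. (f (y i) + B) * (g (y j) + B)) =
        measure_pmf.expectation (Pi_pmf I d p) (\<lambda>y. f (y i) * g (y j))
        + B * measure_pmf.expectation (Pi_pmf I d p) (\<lambda>y. f (y i))
        + B * measure_pmf.expectation (Pi_pmf I d p) (\<lambda>y. g (y j)) + B * B"
    unfolding expand using ifg ifi igj by (simp add: Bochner_Integration.integral_add)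
  also have "\<dots> = measure_pmf.expectation (Pi_pmf I d p) (\<lambda>y. f (y i) * g (y j))
        + B * measure_pmf.expectation (p i) f + B * measure_pmf.expectation (p j) g + B * B"
    using assms by (simp add: pi_marginal)
  finally have L: "measure_pmf.expectation (Pi_pmf I d p) (\<lambda>y. (f (y i) + B) * (g (y j) + B)) = \<dots>" .
  have R: "measure_pmf.expectation (p i) (\<lambda>v. f v + B) * measure_pmf.expectation (p j) (\<lambda>v. g v + B)
     = (measure_pmf.expectation (p i) f + B) * (measure_pmf.expectation (p j) g + B)"
    using if1 ig1 by (simp add: Bochner_Integration.integral_add)
  show ?thesis using E1 L R by (simp add: algebra_simps)
qed



lemma sq_sum_expect:
  fixes X :: "'b \<Rightarrow> real"
  assumes "finite I" "A \<subseteq> I" and bX: "\<And>v. \<bar>X v\<bar> \<le> B"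
  shows "measure_pmf.expectation (Pi_pmf I d p) (\<lambda>y. (\<Sum>i\<in>A. X (y i))\<^sup>2)
    = (\<Sum>i\<in>A. measure_pmf.expectation (p i) (\<lambda>v. (X v)\<^sup>2) - (measure_pmf.expectation (p i) X)\<^sup>2)
      + (\<Sum>i\<in>A. measure_pmf.expectation (p i) X)\<^sup>2"
proof -
  have fA: "finite A" using assms finite_subset by blast
  have B0: "B \<ge> 0" using bX[of undefined] by linarith
  let ?P = "Pi_pmf I d p"
  let ?m = "\<lambda>i. measure_pmf.expectation (p i) X"
  let ?a = "\<lambda>i. measure_pmf.expectation (p i) (\<lambda>v. (X v)\<^sup>2)"
  have int2: "integrable (measure_pmf ?P) (\<lambda>y. X (y i) * X (y j))" for i j
  proof (rule pmf_bounded_integrable[where B="B*B"])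
    fix y show "\<bar>X (y i) * X (y j)\<bar> \<le> B * B"
      unfolding abs_mult by (rule mult_mono) (use bX B0 in auto)
  qed
  have sq: "(\<lambda>y. (\<Sum>i\<in>A. X (y i))\<^sup>2) = (\<lambda>y. \<Sum>i\<in>A. \<Sum>j\<in>A. X (y i) * X (y j))"
    by (simp add: power2_eq_square sum_product)
  have "measure_pmf.expectation ?P (\<lambda>y. \<Sum>i\<in>A. \<Sum>j\<in>A. X (y i) * X (y j))
      = (\<Sum>i\<in>A. \<Sum>j\<in>A. measure_pmf.expectation ?P (\<lambda>y. X (y i) * X (y j)))"
    using int2 by (simp add: Bochner_Integration.integral_sum Bochner_Integration.integrable_sum)
  also have "\<dots> = (\<Sum>i\<in>A. \<Sum>j\<in>A. (if i = j then ?a i - ?m i * ?m j else 0) + ?m i * ?m j)"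
  proof (intro sum.cong refl)
    fix i j assume ij: "i \<in> A" "j \<in> A"
    show "measure_pmf.expectation ?P (\<lambda>y. X (y i) * X (y j)) = (if i = j then ?a i - ?m i * ?m j else 0) + ?m i * ?m j"
    proof (cases "i = j")
      case True
      have "measure_pmf.expectation ?P (\<lambda>y. X (y i) * X (y j)) = measure_pmf.expectation ?P (\<lambda>y. (\<lambda>v. (X v)\<^sup>2) (y i))"
        using True by (simp add: power2_eq_square)
      also have "\<dots> = ?a i" using pi_marginal[where f="\<lambda>v. (X v)\<^sup>2" and d=d and p=p and I=I and i=i] assms ij by auto
      finally show ?thesis using True by simp
    next
      case False
      then show ?thesis using pi_indep2[where f=X and g=X and B=B and d=d and p=p and I=I and i=i and j=j] assms ij by auto
    qed
  qed
  also have "\<dots> = (\<Sum>i\<in>A. ?a i - (?m i)\<^sup>2) + (\<Sum>i\<in>A. ?m i)\<^sup>2"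
    by (simp add: sum.distrib power2_eq_square sum_product fA)
  finally show ?thesis unfolding sq .
qed

lemma pois_X_sq:
  fixes u :: "nat \<Rightarrow> real"
  assumes lam: "0 < lam" and u0: "u 0 = 0" and bu: "\<And>v. \<bar>u v\<bar> \<le> B"
  shows "measure_pmf.expectation (poisson_pmf lam) (\<lambda>v. (u v - (if v = 0 then 1 else 0))\<^sup>2)
       = measure_pmf.expectation (poisson_pmf lam) (\<lambda>v. (u v)\<^sup>2) + exp (- lam)"
proof -
  have B0: "B \<ge> 0" using bu[of 0] by linarith
  have pw: "(\<lambda>v. (u v - (if v = 0 then 1 else 0))\<^sup>2) = (\<lambda>v. (u v)\<^sup>2 + (if v = 0 then 1 else 0::real))"
    using u0 by (auto simp: fun_eq_iff power2_eq_square)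
  have i1: "integrable (measure_pmf (poisson_pmf lam)) (\<lambda>v. (u v)\<^sup>2)"
  proof (rule pmf_bounded_integrable[where B="B*B"])
    fix v show "\<bar>(u v)\<^sup>2\<bar> \<le> B * B"
      unfolding power2_eq_square abs_mult by (rule mult_mono) (use bu B0 in auto)
  qed
  have i2: "integrable (measure_pmf (poisson_pmf lam)) (\<lambda>v. if v = 0 then 1 else 0::real)"
    by (rule pmf_bounded_integrable[where B=1]) auto
  have e2: "measure_pmf.expectation (poisson_pmf lam) (\<lambda>v. if v = 0 then 1 else 0::real) = exp (- lam)"
    by (subst integral_measure_pmf_real[where A="{0}"]) (use lam in \<open>auto split: if_splits\<close>)
  show ?thesis unfolding pw using i1 i2 e2 by (simp add: Bochner_Integration.integral_add)
qed

lemma pois_X_mean: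
  fixes u :: "nat \<Rightarrow> real"
  assumes lam: "0 < lam" and u0: "u 0 = 0" and uL: "\<And>j. j > L \<Longrightarrow> u j = 0"
  shows "measure_pmf.expectation (poisson_pmf lam) (\<lambda>v. u v - (if v = 0 then 1 else 0))
       = (\<Sum>j=1..L. u j * (lam ^ j / fact j * exp (- lam))) - exp (- lam)"
proof -
  have "measure_pmf.expectation (poisson_pmf lam) (\<lambda>v. u v - (if v = 0 then 1 else 0))
     = (\<Sum>j\<in>{0..L}. (u j - (if j = 0 then 1 else 0)) * pmf (poisson_pmf lam) j)"
    apply (rule integral_measure_pmf_real)
     apply simp
    subgoal for j using uL[of j] by (cases "j \<le> L") auto
    done
  also have "\<dots> = (\<Sum>j\<in>insert 0 {1..L}. (u j - (if j = 0 then 1 else 0)) * (lam ^ j / fact j * exp (- lam)))"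
    using lam by (intro sum.cong) auto
  also have "\<dots> = (\<Sum>j=1..L. u j * (lam ^ j / fact j * exp (- lam))) - exp (- lam)"
    by (subst sum.insert) (auto simp: u0)
  finally show ?thesis .
qed

lemma ucoef_term:
  assumes "k > 0" "n > 0" "M > 0" and that: "1 \<le> j" "j \<le> L"
  shows "u_coef w L M k n j * ((n * real c / k) ^ j / fact j * exp (- (n * real c / k)))
       = exp (- (n * real c / k)) * ((real c / real M) ^ j * w j)"
proof -
  have "(k / (n * real M)) ^ j * (n * real c / k) ^ j = (real c / real M) ^ j"
    unfolding power_mult_distrib[symmetric] using assms by (simp add: field_simps)
  thus ?thesis using that assms unfolding u_coef_def by (simp add: field_simps)
qed

lemma pois_tail:
  assumes L1: "1 \<le> L" and lamL: "real L \<le> lam"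
  shows "measure_pmf.expectation (poisson_pmf lam) (\<lambda>v. if v \<le> L then 1 else 0::real)
       \<le> exp (- lam) * (exp 1 * lam / real L) ^ L"
proof -
  have lam: "0 < lam" using L1 lamL by linarith
  have Lp: "real L > 0" using L1 by simp
  have "measure_pmf.expectation (poisson_pmf lam) (\<lambda>v. if v \<le> L then 1 else 0::real)
     = (\<Sum>j\<in>{..L}. (if j \<le> L then 1 else 0) * pmf (poisson_pmf lam) j)"
    by (rule integral_measure_pmf_real) (auto split: if_splits)
  also have "\<dots> = (\<Sum>j\<le>L. lam ^ j / fact j) * exp (- lam)"
    using lam by (simp add: sum_distrib_right)
  also have "\<dots> \<le> ((lam / L) ^ L * exp (real L)) * exp (- lam)"
  proof (rule mult_right_mono)
    have r1: "1 \<le> lam / L" using lamL Lp by simp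
    have "(\<Sum>j\<le>L. lam ^ j / fact j) \<le> (\<Sum>j\<le>L. (lam / L) ^ L * (real L ^ j / fact j))"
    proof (rule sum_mono)
      fix j assume j: "j \<in> {..L}"
      have "lam ^ j = (lam / L) ^ j * real L ^ j" using Lp by (simp add: power_mult_distrib[symmetric])
      also have "\<dots> \<le> (lam / L) ^ L * real L ^ j"
        by (rule mult_right_mono, rule power_increasing) (use j r1 in auto)
      finally have h: "lam ^ j \<le> (lam / L) ^ L * real L ^ j" .
      show "lam ^ j / fact j \<le> (lam / L) ^ L * (real L ^ j / fact j)"
        using divide_right_mono[OF h, of "fact j"] by simp
    qed
    also have "\<dots> = (lam / L) ^ L * (\<Sum>j\<le>L. real L ^ j / fact j)" by (simp add: sum_distrib_left)
    also have "\<dots> \<le> (lam / L) ^ L * exp (real L)"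
      by (rule mult_left_mono, rule exp_partial_le) (use lam Lp in auto)
    finally show "(\<Sum>j\<le>L. lam ^ j / fact j) \<le> (lam / L) ^ L * exp (real L)" .
  qed simp
  also have "\<dots> = exp (- lam) * (exp 1 * lam / real L) ^ L"
  proof -
    have "exp (real L) = exp 1 ^ L" using exp_of_nat_mult[of L 1] by simp
    moreover have "(exp 1 * lam / real L) ^ L = exp 1 ^ L * (lam / L) ^ L"
      by (simp add: power_mult_distrib[symmetric] mult.assoc)
    ultimately show ?thesis by simp
  qed
  finally show ?thesis .
qed

lemma exponent_bound:
  fixes k a b lam :: real and L :: nat
  assumes k1: "k > 1" and a: "0 < a" and ab: "a < b" and L: "real L = a * ln k" and lam: "lam \<ge> b * ln k"
  shows "exp (- lam) * (exp 1 * lam / real L) ^ L \<le> k powr (- b + a * ln (exp 1 * b / a))"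
proof -
  define l where "l = ln k"
  have l: "l > 0" using k1 by (simp add: l_def)
  define lam0 where "lam0 = b * l"
  have Lp: "real L > 0" using L a l l_def by simp
  have L0: "real L \<le> lam0" using L ab l a unfolding lam0_def l_def by (simp add: mult_right_mono)
  have l0p: "lam0 > 0" using Lp L0 by linarith
  have lamge: "lam \<ge> lam0" using lam unfolding lam0_def l_def .
  have lamp: "lam > 0" using lamge l0p by linarith
  have "(exp 1 * lam / real L) ^ L = exp (real L * ln (exp 1 * lam / real L))"
  proof -
    have pos: "exp 1 * lam / real L > 0" using lamp Lp by simp
    have "(exp 1 * lam / real L) ^ L = exp (ln ((exp 1 * lam / real L) ^ L))"
      using pos by simp
    thus ?thesis by (simp add: ln_realpow pos)
  qed
  hence lhs: "exp (- lam) * (exp 1 * lam / real L) ^ L = exp (- lam + real L * (1 + ln lam - ln (real L)))"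
    using lamp Lp by (simp add: exp_add[symmetric] ln_mult ln_div)
  have rhs: "k powr (- b + a * ln (exp 1 * b / a)) = exp (- lam0 + real L * (1 + ln lam0 - ln (real L)))"
  proof -
    have "k powr (- b + a * ln (exp 1 * b / a)) = exp ((- b + a * ln (exp 1 * b / a)) * l)"
      using k1 by (simp add: powr_def l_def)
    also have "(- b + a * ln (exp 1 * b / a)) * l = - lam0 + real L * (1 + ln lam0 - ln (real L))"
      using a ab l unfolding L lam0_def l_def[symmetric]
      by (simp add: ln_mult ln_div algebra_simps)
    finally show ?thesis .
  qed
  have key: "real L * (ln lam - ln lam0) \<le> lam - lam0"
  proof -
    have "ln lam - ln lam0 = ln (lam / lam0)" using lamp l0p by (simp add: ln_div)
    also have "\<dots> \<le> lam / lam0 - 1" by (rule ln_le_minus_one) (use lamp l0p in simp)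
    finally have h: "ln lam - ln lam0 \<le> (lam - lam0) / lam0" using l0p by (simp add: field_simps)
    have "real L * (ln lam - ln lam0) \<le> real L * ((lam - lam0) / lam0)"
      by (rule mult_left_mono[OF h]) (use Lp in simp)
    also have "\<dots> \<le> lam0 * ((lam - lam0) / lam0)"
      by (rule mult_right_mono[OF L0]) (use lamge l0p in simp)
    also have "\<dots> = lam - lam0" using l0p by simp
    finally show ?thesis .
  qed
  show ?thesis unfolding lhs rhs using key by (simp add: algebra_simps)
qed

lemma pw_bound:
  fixes u :: "nat \<Rightarrow> real" and k :: real
  assumes fI: "finite I" and u0: "u 0 = 0" and uL: "\<And>j. j > L \<Longrightarrow> u j = 0"
    and ck: "real (card I) \<le> k"
  shows "(C_hat I u k N - real (card I))\<^sup>2 \<le>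
           (\<Sum>i\<in>{i\<in>I. P i}. u (N i) - (if N i = 0 then 1 else 0))\<^sup>2
           + k\<^sup>2 * (\<Sum>i\<in>{i\<in>I. \<not> P i}. if N i \<le> L then 1 else 0)"
    and "(C_hat I u k N - real (card I))\<^sup>2 \<le> k\<^sup>2"
proof -
  define X where "X v = u v - (if v = 0 then 1 else 0)" for v
  define Cs where "Cs = C_seen I N"
  have Cs: "Cs = (\<Sum>i\<in>I. if 1 \<le> N i then 1 else 0)" unfolding Cs_def by (rule C_seen_eq[OF fI])
  have Cs0: "0 \<le> Cs" unfolding Cs by (rule sum_nonneg) auto
  have CsC: "Cs \<le> real (card I)" unfolding Cs
    using sum_bounded_above[of I "\<lambda>i. if 1 \<le> N i then 1 else 0::real" 1] by simp
  have k0: "0 \<le> k" using ck by linarith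
  have Ct: "C_tilde I u N = Cs + (\<Sum>i\<in>I. u (N i))"
  proof -
    have "C_tilde I u N = Cs + (\<Sum>i\<in>I. if 1 \<le> N i then u (N i) else 0)"
      unfolding C_tilde_def Cs_def by (simp only: infsum_fp[OF fI])
    also have "(\<Sum>i\<in>I. if 1 \<le> N i then u (N i) else 0) = (\<Sum>i\<in>I. u (N i))"
      by (intro sum.cong refl) (auto simp: u0 not_le)
    finally show ?thesis .
  qed
  have diff: "C_tilde I u N - real (card I) = (\<Sum>i\<in>I. X (N i))"
  proof -
    have "real (card I) = (\<Sum>i\<in>I. 1::real)" by simp
    hence "C_tilde I u N - real (card I) = (\<Sum>i\<in>I. (if 1 \<le> N i then 1 else 0) + u (N i) - 1)"
      unfolding Ct Cs by (simp add: sum.distrib sum_subtractf)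
    also have "\<dots> = (\<Sum>i\<in>I. X (N i))" by (intro sum.cong refl) (auto simp: X_def)
    finally show ?thesis .
  qed
  have split: "(\<Sum>i\<in>I. X (N i)) = (\<Sum>i\<in>{i\<in>I. P i}. X (N i)) + (\<Sum>i\<in>{i\<in>I. \<not> P i}. X (N i))"
  proof -
    have "I = {i\<in>I. P i} \<union> {i\<in>I. \<not> P i}" by auto
    hence "(\<Sum>i\<in>I. X (N i)) = (\<Sum>i\<in>{i\<in>I. P i} \<union> {i\<in>I. \<not> P i}. X (N i))" by simp
    also have "\<dots> = (\<Sum>i\<in>{i\<in>I. P i}. X (N i)) + (\<Sum>i\<in>{i\<in>I. \<not> P i}. X (N i))"
      by (rule sum.union_disjoint) (use fI in auto)
    finally show ?thesis .
  qed
  define Ch where "Ch = C_hat I u k N"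
  have Ch: "Ch = min (max (C_tilde I u N) Cs) k" unfolding Ch_def C_hat_def Cs_def ..
  have bnd: "\<bar>Ch - real (card I)\<bar> \<le> k" using Ch Cs0 CsC ck k0 by (auto simp: abs_le_iff min_def max_def)
  have sq2: "(Ch - real (card I))\<^sup>2 \<le> k\<^sup>2"
    using bnd k0 by (metis abs_le_square_iff abs_of_nonneg)
  thus "(C_hat I u k N - real (card I))\<^sup>2 \<le> k\<^sup>2" unfolding Ch_def .
  have cl: "\<bar>Ch - real (card I)\<bar> \<le> \<bar>C_tilde I u N - real (card I)\<bar>"
    using Ch CsC ck by (auto simp: abs_le_iff min_def max_def)
  have ind0: "0 \<le> (\<Sum>i\<in>{i\<in>I. \<not> P i}. if N i \<le> L then 1 else 0::real)" by (rule sum_nonneg) auto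
  show "(C_hat I u k N - real (card I))\<^sup>2 \<le>
           (\<Sum>i\<in>{i\<in>I. P i}. u (N i) - (if N i = 0 then 1 else 0))\<^sup>2
           + k\<^sup>2 * (\<Sum>i\<in>{i\<in>I. \<not> P i}. if N i \<le> L then 1 else 0)"
  proof (cases "\<forall>i\<in>{i\<in>I. \<not> P i}. L < N i")
    case True
    have "(\<Sum>i\<in>{i\<in>I. \<not> P i}. X (N i)) = 0"
      by (rule sum.neutral) (use True uL in \<open>auto simp: X_def\<close>)
    hence "C_tilde I u N - real (card I) = (\<Sum>i\<in>{i\<in>I. P i}. X (N i))" using diff split by simp
    hence "(Ch - real (card I))\<^sup>2 \<le> (\<Sum>i\<in>{i\<in>I. P i}. X (N i))\<^sup>2"
      using cl by (metis abs_le_square_iff)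
    moreover have "0 \<le> k\<^sup>2 * (\<Sum>i\<in>{i\<in>I. \<not> P i}. if N i \<le> L then 1 else 0::real)"
      using ind0 by simp
    ultimately show ?thesis unfolding Ch_def X_def by linarith
  next
    case False
    then obtain i0 where i0: "i0 \<in> {i\<in>I. \<not> P i}" "N i0 \<le> L" by (auto simp: not_less)
    have "1 \<le> (\<Sum>i\<in>{i\<in>I. \<not> P i}. if N i \<le> L then 1 else 0::real)"
      using member_le_sum[of i0 "{i\<in>I. \<not> P i}" "\<lambda>i. if N i \<le> L then 1 else 0::real"] i0 fI by auto
    hence "k\<^sup>2 \<le> k\<^sup>2 * (\<Sum>i\<in>{i\<in>I. \<not> P i}. if N i \<le> L then 1 else 0::real)"
      by (simp add: mult_le_cancel_left1)
    thus ?thesis using sq2 unfolding Ch_def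
      by (smt (verit) zero_le_power2)
  qed
qed

theorem proposition1:
  fixes I :: "'c set" and kc :: "'c \<Rightarrow> nat" and n \<alpha> \<beta> :: real
    and L M :: nat and w :: "nat \<Rightarrow> real"
  assumes "finite I" and "\<forall>i\<in>I. 0 < kc i"
    and "(\<Sum>i\<in>I. kc i) \<ge> 2"
    and "n > 0" and "\<alpha> > 0" and "\<beta> > \<alpha>"
    and "real L = \<alpha> * ln (real (\<Sum>i\<in>I. kc i))"
    and "real M = \<beta> * real (\<Sum>i\<in>I. kc i) * ln (real (\<Sum>i\<in>I. kc i)) / n"
  shows "let k = real (\<Sum>i\<in>I. kc i); C = real (card I); u = u_coef w L M k n in
    measure_pmf.expectation (poisson_hist I kc n) (\<lambda>N. (C_hat I u k N - C)\<^sup>2)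
      \<le> k\<^sup>2 * exp (- 2 * n / k) * (Bw_err M L w)\<^sup>2 + k * exp (- n / k)
        + k * Max ((\<lambda>m. measure_pmf.expectation (poisson_pmf (n * real m / k)) (\<lambda>N. (u N)\<^sup>2)) ` {1..M})
        + k powr (- (\<beta> - \<alpha> * ln (exp 1 * \<beta> / \<alpha>) - 3))"
proof -
  note fI = assms(1)
  define k where "k = real (\<Sum>i\<in>I. kc i)"
  define u where "u = u_coef w L M k n"
  define p where "p i = poisson_pmf (n * real (kc i) / k)" for i
  define P where "P = poisson_hist I kc n"
  have P: "P = Pi_pmf I 0 p" unfolding P_def poisson_hist_def p_def k_def ..
  define X where "X v = u v - (if v = 0 then 1 else 0)" for v
  define Mx where "Mx = Max ((\<lambda>m. measure_pmf.expectation (poisson_pmf (n * real m / k)) (\<lambda>N. (u N)\<^sup>2)) ` {1..M})"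
  define T where "T = k powr (- \<beta> + \<alpha> * ln (exp 1 * \<beta> / \<alpha>))"
  define Bw where "Bw = Bw_err M L w"
  define Small where "Small = {i\<in>I. kc i \<le> M}"
  define Big where "Big = {i\<in>I. \<not> kc i \<le> M}"
  have n: "n > 0" and a: "\<alpha> > 0" and ab: "\<beta> > \<alpha>" using assms by auto
  have k2: "k \<ge> 2" unfolding k_def using assms(3) by linarith
  have kp: "k > 0" using k2 by simp
  have lk: "ln k > 0" using k2 by simp
  have Lk: "real L = \<alpha> * ln k" using assms(7) unfolding k_def .
  have Mk: "real M = \<beta> * k * ln k / n" using assms(8) unfolding k_def .
  have L1: "1 \<le> L" using Lk a lk by (metis of_nat_0_less_iff less_one not_le mult_pos_pos of_nat_0 order_less_irrefl)
  have Mp: "real M > 0" using Mk ab a kp lk n by simp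
  hence M1: "M > 0" by simp
  have cardI: "real (card I) \<le> k"
  proof -
    have "card I = (\<Sum>i\<in>I. 1::nat)" by simp
    also have "\<dots> \<le> (\<Sum>i\<in>I. kc i)" by (rule sum_mono) (use assms(2) in auto)
    finally show ?thesis unfolding k_def by linarith
  qed
  have cS: "real (card Small) \<le> k" and cB: "real (card Big) \<le> k"
    using cardI card_mono[OF fI, of Small] card_mono[OF fI, of Big] unfolding Small_def Big_def by auto
  have u0: "u 0 = 0" and uL: "\<And>j. j > L \<Longrightarrow> u j = 0" unfolding u_def u_coef_def by auto
  define Bu where "Bu = (\<Sum>j\<in>{1..L}. \<bar>u j\<bar>)"
  have bu: "\<bar>u v\<bar> \<le> Bu" for v
  proof (cases "1 \<le> v \<and> v \<le> L")
    case True thus ?thesis unfolding Bu_def by (intro member_le_sum) auto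
  next
    case False
    hence "u v = 0" unfolding u_def u_coef_def by auto
    thus ?thesis unfolding Bu_def by (simp add: sum_nonneg)
  qed
  have bX: "\<bar>X v\<bar> \<le> Bu + 1" for v using bu[of v] by (auto simp: X_def)
  have lam_pos: "0 < n * real (kc i) / k" if "i \<in> I" for i using that assms(2) n kp by simp
  define R where "R N = (\<Sum>i\<in>Small. X (N i))\<^sup>2 + k\<^sup>2 * (\<Sum>i\<in>Big. if N i \<le> L then 1 else 0::real)" for N
  have pw: "(C_hat I u k N - real (card I))\<^sup>2 \<le> R N" for N
    using pw_bound(1)[where I=I and u=u and L=L and k=k and N=N and P="\<lambda>i. kc i \<le> M", OF fI u0 uL cardI] unfolding R_def Small_def Big_def X_def .
  have pw2: "(C_hat I u k N - real (card I))\<^sup>2 \<le> k\<^sup>2" for N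
    using pw_bound(2)[where I=I and u=u and L=L and k=k and N=N, OF fI u0 uL cardI] .
  have intL: "integrable (measure_pmf P) (\<lambda>N. (C_hat I u k N - real (card I))\<^sup>2)"
    by (rule pmf_bounded_integrable[where B="k\<^sup>2"]) (use pw2 in auto)
  have intS: "integrable (measure_pmf P) (\<lambda>N. (\<Sum>i\<in>Small. X (N i))\<^sup>2)"
  proof (rule pmf_bounded_integrable[where B="(real (card Small) * (Bu + 1))\<^sup>2"])
    fix N
    have "\<bar>\<Sum>i\<in>Small. X (N i)\<bar> \<le> (\<Sum>i\<in>Small. \<bar>X (N i)\<bar>)" by (rule sum_abs)
    also have "\<dots> \<le> real (card Small) * (Bu + 1)" by (rule sum_bounded_above) (rule bX)
    finally have "\<bar>\<Sum>i\<in>Small. X (N i)\<bar> \<le> real (card Small) * (Bu + 1)" .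
    hence "(\<Sum>i\<in>Small. X (N i))\<^sup>2 \<le> (real (card Small) * (Bu + 1))\<^sup>2"
      by (metis abs_le_square_iff abs_ge_zero abs_of_nonneg order_trans)
    thus "\<bar>(\<Sum>i\<in>Small. X (N i))\<^sup>2\<bar> \<le> (real (card Small) * (Bu + 1))\<^sup>2" by simp
  qed
  have intI: "integrable (measure_pmf P) (\<lambda>N. if N i \<le> L then 1 else 0::real)" for i
    by (rule pmf_bounded_integrable[where B=1]) auto
  have intR: "integrable (measure_pmf P) R"
  proof -
    have Rf: "R = (\<lambda>N. (\<Sum>i\<in>Small. X (N i))\<^sup>2 + k\<^sup>2 * (\<Sum>i\<in>Big. if N i \<le> L then 1 else 0::real))"
      by (rule ext) (simp only: R_def)
    show ?thesis unfolding Rf using intS intI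
      by (intro Bochner_Integration.integrable_add integrable_mult_right Bochner_Integration.integrable_sum) auto
  qed
  have step1: "measure_pmf.expectation P (\<lambda>N. (C_hat I u k N - real (card I))\<^sup>2)
      \<le> measure_pmf.expectation P (\<lambda>N. (\<Sum>i\<in>Small. X (N i))\<^sup>2)
        + k\<^sup>2 * (\<Sum>i\<in>Big. measure_pmf.expectation (p i) (\<lambda>v. if v \<le> L then 1 else 0::real))"
  proof -
    have "measure_pmf.expectation P (\<lambda>N. (C_hat I u k N - real (card I))\<^sup>2) \<le> measure_pmf.expectation P R"
      by (rule integral_mono) (use intL intR pw in auto)
    also have "measure_pmf.expectation P R = measure_pmf.expectation P (\<lambda>N. (\<Sum>i\<in>Small. X (N i))\<^sup>2)
        + k\<^sup>2 * (\<Sum>i\<in>Big. measure_pmf.expectation P (\<lambda>N. if N i \<le> L then 1 else 0::real))"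
      unfolding R_def using intS intI
      by (simp add: Bochner_Integration.integral_add Bochner_Integration.integral_sum Bochner_Integration.integrable_sum)
    also have "(\<Sum>i\<in>Big. measure_pmf.expectation P (\<lambda>N. if N i \<le> L then 1 else 0::real))
        = (\<Sum>i\<in>Big. measure_pmf.expectation (p i) (\<lambda>v. if v \<le> L then 1 else 0::real))"
    proof (intro sum.cong refl)
      fix i assume "i \<in> Big"
      hence "i \<in> I" unfolding Big_def by auto
      thus "measure_pmf.expectation P (\<lambda>N. if N i \<le> L then 1 else 0::real)
          = measure_pmf.expectation (p i) (\<lambda>v. if v \<le> L then 1 else 0::real)"
        unfolding P using pi_marginal[where f="\<lambda>v. if v \<le> L then 1 else 0::real" and I=I and i=i and d=0 and p=p] fI
        by simp
    qed
    finally show ?thesis .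
  qed
  define m where "m i = measure_pmf.expectation (p i) X" for i
  define aa where "aa i = measure_pmf.expectation (p i) (\<lambda>v. (X v)\<^sup>2)" for i
  have ES: "measure_pmf.expectation P (\<lambda>N. (\<Sum>i\<in>Small. X (N i))\<^sup>2)
      = (\<Sum>i\<in>Small. aa i - (m i)\<^sup>2) + (\<Sum>i\<in>Small. m i)\<^sup>2"
    unfolding P m_def aa_def by (rule sq_sum_expect[OF fI _ bX]) (auto simp: Small_def)
  have Mx_ge: "measure_pmf.expectation (p i) (\<lambda>v. (u v)\<^sup>2) \<le> Mx" if "i \<in> Small" for i
  proof -
    have mem: "kc i \<in> {1..M}" using that assms(2) unfolding Small_def by auto
    show ?thesis unfolding Mx_def p_def
      by (rule Max_ge) (simp, rule imageI, rule mem)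
  qed
  have Mx0: "0 \<le> Mx"
  proof -
    have "0 \<le> measure_pmf.expectation (poisson_pmf (n * real 1 / k)) (\<lambda>N. (u N)\<^sup>2)"
      by (rule Bochner_Integration.integral_nonneg) simp
    also have "\<dots> \<le> Mx" unfolding Mx_def
    proof (rule Max_ge)
      show "measure_pmf.expectation (poisson_pmf (n * real 1 / k)) (\<lambda>N. (u N)\<^sup>2) \<in>
        (\<lambda>m. measure_pmf.expectation (poisson_pmf (n * real m / k)) (\<lambda>N. (u N)\<^sup>2)) ` {1..M}"
        by (rule imageI) (use M1 in auto)
    qed simp
    finally show ?thesis .
  qed
  have expl: "exp (- (n * real (kc i) / k)) \<le> exp (- n / k)" if "i \<in> I" for i
  proof -
    have "1 \<le> real (kc i)" using assms(2) that by (simp add: Suc_le_eq)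
    hence "n * 1 \<le> n * real (kc i)" using n by (intro mult_left_mono) auto
    hence "n / k \<le> n * real (kc i) / k" using kp by (simp add: divide_right_mono)
    thus ?thesis by simp
  qed
  have aa_le: "aa i \<le> Mx + exp (- n / k)" if "i \<in> Small" for i
  proof -
    have iI: "i \<in> I" using that unfolding Small_def by auto
    have "aa i = measure_pmf.expectation (p i) (\<lambda>v. (u v)\<^sup>2) + exp (- (n * real (kc i) / k))"
      unfolding aa_def X_def p_def by (rule pois_X_sq[where u=u and B=Bu, OF lam_pos[OF iI] u0 bu])
    thus ?thesis using Mx_ge[OF that] expl[OF iI] by linarith
  qed
  have Bw0: "0 \<le> Bw"
  proof -
    have "\<bar>(\<Sum>j=1..L. (real 1 / real M) ^ j * w j) - 1\<bar> \<le> Bw"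
      unfolding Bw_def Bw_err_def
      by (rule Max_ge) (simp, rule imageI, use M1 in auto)
    thus ?thesis by linarith
  qed
  have m_le: "\<bar>m i\<bar> \<le> exp (- n / k) * Bw" if "i \<in> Small" for i
  proof -
    have iI: "i \<in> I" using that unfolding Small_def by auto
    define lam where "lam = n * real (kc i) / k"
    have "m i = (\<Sum>j=1..L. u j * (lam ^ j / fact j * exp (- lam))) - exp (- lam)"
      unfolding m_def X_def p_def lam_def by (rule pois_X_mean[where u=u and L=L, OF lam_pos[OF iI] u0 uL])
    also have "(\<Sum>j=1..L. u j * (lam ^ j / fact j * exp (- lam)))
        = (\<Sum>j=1..L. exp (- lam) * ((real (kc i) / real M) ^ j * w j))"
      unfolding lam_def u_def by (intro sum.cong refl ucoef_term) (use kp n M1 in auto)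
    finally have "m i = exp (- lam) * ((\<Sum>j=1..L. (real (kc i) / real M) ^ j * w j) - 1)"
      by (simp add: sum_distrib_left algebra_simps)
    hence "\<bar>m i\<bar> = exp (- lam) * \<bar>(\<Sum>j=1..L. (real (kc i) / real M) ^ j * w j) - 1\<bar>"
      by (simp add: abs_mult)
    also have "\<dots> \<le> exp (- n / k) * Bw"
    proof (rule mult_mono)
      show "exp (- lam) \<le> exp (- n / k)" unfolding lam_def by (rule expl[OF iI])
      have mem: "kc i \<in> {1..M}" using that assms(2) unfolding Small_def by auto
      show "\<bar>(\<Sum>j=1..L. (real (kc i) / real M) ^ j * w j) - 1\<bar> \<le> Bw"
        unfolding Bw_def Bw_err_def
        by (rule Max_ge) (simp, rule imageI, rule mem)
    qed (use Bw0 in auto)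
    finally show ?thesis .
  qed
  have step2: "measure_pmf.expectation P (\<lambda>N. (\<Sum>i\<in>Small. X (N i))\<^sup>2)
      \<le> k\<^sup>2 * exp (- 2 * n / k) * Bw\<^sup>2 + k * exp (- n / k) + k * Mx"
  proof -
    have "(\<Sum>i\<in>Small. aa i - (m i)\<^sup>2) \<le> (\<Sum>i\<in>Small. Mx + exp (- n / k))"
      by (rule sum_mono) (use aa_le in \<open>smt (verit) zero_le_power2\<close>)
    also have "\<dots> = real (card Small) * (Mx + exp (- n / k))" by simp
    also have "\<dots> \<le> k * (Mx + exp (- n / k))"
      by (rule mult_right_mono[OF cS]) (use Mx0 in \<open>simp add: add_nonneg_nonneg\<close>)
    finally have A: "(\<Sum>i\<in>Small. aa i - (m i)\<^sup>2) \<le> k * exp (- n / k) + k * Mx" by (simp add: algebra_simps)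
    have "\<bar>\<Sum>i\<in>Small. m i\<bar> \<le> (\<Sum>i\<in>Small. \<bar>m i\<bar>)" by (rule sum_abs)
    also have "\<dots> \<le> real (card Small) * (exp (- n / k) * Bw)" by (rule sum_bounded_above) (rule m_le)
    also have "\<dots> \<le> k * (exp (- n / k) * Bw)" by (rule mult_right_mono[OF cS]) (use Bw0 in simp)
    finally have "\<bar>\<Sum>i\<in>Small. m i\<bar> \<le> k * (exp (- n / k) * Bw)" .
    hence "(\<Sum>i\<in>Small. m i)\<^sup>2 \<le> (k * (exp (- n / k) * Bw))\<^sup>2"
      by (metis abs_le_square_iff abs_ge_zero abs_of_nonneg order_trans)
    also have "\<dots> = k\<^sup>2 * exp (- 2 * n / k) * Bw\<^sup>2"
    proof -
      have "exp (- 2 * n / k) = (exp (- n / k))\<^sup>2"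
        by (simp add: power2_eq_square exp_add[symmetric])
      thus ?thesis by (simp add: power_mult_distrib)
    qed
    finally show ?thesis unfolding ES using A by linarith
  qed
  have T0: "0 \<le> T" unfolding T_def by simp
  have tail: "measure_pmf.expectation (p i) (\<lambda>v. if v \<le> L then 1 else 0::real) \<le> T" if "i \<in> Big" for i
  proof -
    have iI: "i \<in> I" and big: "M < kc i" using that unfolding Big_def by auto
    define lam where "lam = n * real (kc i) / k"
    have "\<beta> * ln k = n * real M / k" using Mk n kp by (simp add: field_simps)
    also have "\<dots> \<le> lam" unfolding lam_def using big n kp by (simp add: divide_right_mono)
    finally have lb: "\<beta> * ln k \<le> lam" .
    have "real L \<le> \<beta> * ln k" using Lk ab lk by simp
    hence Ll: "real L \<le> lam" using lb by linarith
    have "measure_pmf.expectation (p i) (\<lambda>v. if v \<le> L then 1 else 0::real) \<le> exp (- lam) * (exp 1 * lam / real L) ^ L"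
      unfolding p_def lam_def[symmetric] by (rule pois_tail[OF L1 Ll])
    also have "\<dots> \<le> T" unfolding T_def using k2 a ab Lk lb by (intro exponent_bound) auto
    finally show ?thesis .
  qed
  have step3: "k\<^sup>2 * (\<Sum>i\<in>Big. measure_pmf.expectation (p i) (\<lambda>v. if v \<le> L then 1 else 0::real))
       \<le> k powr (- (\<beta> - \<alpha> * ln (exp 1 * \<beta> / \<alpha>) - 3))"
  proof -
    have "(\<Sum>i\<in>Big. measure_pmf.expectation (p i) (\<lambda>v. if v \<le> L then 1 else 0::real)) \<le> real (card Big) * T"
      by (rule sum_bounded_above) (rule tail)
    also have "\<dots> \<le> k * T" by (rule mult_right_mono[OF cB T0])
    finally have "k\<^sup>2 * (\<Sum>i\<in>Big. measure_pmf.expectation (p i) (\<lambda>v. if v \<le> L then 1 else 0::real)) \<le> k\<^sup>2 * (k * T)"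
      by (rule mult_left_mono) simp
    also have "k\<^sup>2 * (k * T) = k powr (- (\<beta> - \<alpha> * ln (exp 1 * \<beta> / \<alpha>) - 3))"
    proof -
      have "k\<^sup>2 * (k * T) = k powr (real 3) * T" using kp by (simp add: powr_realpow power3_eq_cube power2_eq_square)
      also have "\<dots> = k powr (- (\<beta> - \<alpha> * ln (exp 1 * \<beta> / \<alpha>) - 3))"
        unfolding T_def by (simp add: powr_add[symmetric] algebra_simps)
      finally show ?thesis .
    qed
    finally show ?thesis .
  qed
  have main: "measure_pmf.expectation P (\<lambda>N. (C_hat I u k N - real (card I))\<^sup>2)
     \<le> k\<^sup>2 * exp (- 2 * n / k) * Bw\<^sup>2 + k * exp (- n / k) + k * Mx
        + k powr (- (\<beta> - \<alpha> * ln (exp 1 * \<beta> / \<alpha>) - 3))"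
    using step1 step2 step3 by linarith
  show ?thesis unfolding Let_def
    using main unfolding P_def Bw_def Mx_def u_def k_def .
qed

end
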